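(* Let $c\neq 1$ be a real number with $c<1$. For every $k\ge 2$ and every sequence $(\varepsilon_1,\dots,\varepsilon_k)\in\{0,1\}^k$ with $\varepsilon_1=1$ and $\varepsilon_k=0$, one has $$I(\varepsilon_1,\varepsilon_2,\dots,\varepsilon_k)=I(1-\varepsilon_k,\dots,1-\varepsilon_2,1-\varepsilon_1).$$ In particular, $Z_c(1,2)=Z_c(3)$.
   Context: For a real parameter $c<1$, consider the differential forms on $[0,1]$ $$\omega_0(t)=\frac{dt}{t},\qquad \omega_1(t)=\frac{(1-c)\,dt}{(1-t)(1-ct)}.$$ For $\varepsilon_1,\dots,\varepsilon_k\in\{0,1\}$ with $\varepsilon_1=1$ and $\varepsilon_k=0$, define the iterated integral $$I(\varepsilon_1,\dots,\varepsilon_k)=\int_{0<t_1<\cdots<t_k<1}\omega_{\varepsilon_1}(t_1)\cdots\omega_{\varepsilon_k}(t_k).$$ For integers $r\ge1$, $k_1,\dots,k_r\ge1$ with $k_r\ge2$, define $Z_c(k_1,\dots,k_r)=I(1,0^{k_1-1},1,0^{k_2-1},\dots,1,0^{k_r-1})$, where $0^j$ denotes $j$ consecutive zeros. *)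

theory Defs
  imports "HOL-Analysis.Analysis"
begin

text \<open>The forms omega_0 = dt/t and omega_1 = (1-c) dt/((1-t)(1-ct)), as densities;
  the letter e is 0 or 1.\<close>
definition omega :: "real \<Rightarrow> nat \<Rightarrow> real \<Rightarrow> real" where
  "omega c e t = (if e = 0 then 1 / t else (1 - c) / ((1 - t) * (1 - c * t)))"

definition open_simplex :: "nat \<Rightarrow> (nat \<Rightarrow> real) set" where
  "open_simplex k = {t. (\<forall>i<k. 0 < t i \<and> t i < 1) \<and> (\<forall>i. Suc i < k \<longrightarrow> t i < t (Suc i))}"

definition iterI :: "real \<Rightarrow> nat list \<Rightarrow> real" where
  "iterI c es = (\<integral>t. indicator (open_simplex (length es)) t *
       (\<Prod>i<length es. omega c (es ! i) (t i)) \<partial>(PiM {..<length es} (\<lambda>_. lborel)))"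

definition Zc :: "real \<Rightarrow> nat list \<Rightarrow> real" where
  "Zc c ks = iterI c (concat (map (\<lambda>k. 1 # replicate (k - 1) 0) ks))"

end

theory Submission
  imports Defs
begin


definition phi :: "real \<Rightarrow> real \<Rightarrow> real" where "phi c x = (1 - x) / (1 - c * x)"
definition wt :: "real \<Rightarrow> real \<Rightarrow> real" where "wt c x = (1 - c) / (1 - c * x)^2"

lemma pos_den: fixes c x :: real assumes "c < 1" "0 \<le> x" "x \<le> 1" shows "0 < 1 - c * x"
proof (cases "c \<le> 0")
  case True then show ?thesis using assms by (smt (verit) mult_nonpos_nonneg)
next
  case False
  then have "c * x \<le> c" using assms by (simp add: mult_left_le)
  then show ?thesis using assms by linarith
qed

lemma oneD:
  fixes c :: real assumes c: "c < 1" and B[measurable]: "B \<in> sets borel"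
  shows "(\<integral>\<^sup>+x. ennreal (wt c x) * indicator {0..1} x * indicator B (phi c x) \<partial>lborel)
       = (\<integral>\<^sup>+y. indicator {0..1} y * indicator B y \<partial>lborel)"
proof -
  define g where "g x = x / (1 - c + c * x)" for x :: real
  define g' where "g' x = (1 - c) / (1 - c + c * x)^2" for x :: real
  have den: "0 < 1 - c + c * x" if "x \<in> {0..1}" for x
    using pos_den[OF c, of "1 - x"] that by (auto simp: algebra_simps)
  have dg: "(g has_real_derivative g' x) (at x)" if "x \<in> {0..1}" for x
    unfolding g_def g'_def using den[OF that]
    by (auto intro!: derivative_eq_intros simp: field_simps power2_eq_square)
  have cg: "continuous_on {0..1} g'"
    unfolding g'_def using den by (intro continuous_intros) (auto, fastforce)
  have nn: "g' x \<ge> 0" if "x \<in> {0..1}" for x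
    unfolding g'_def using c by auto
  have "(\<integral>\<^sup>+y. indicator B y * indicator {g 0..g 1} y \<partial>lborel)
      = (\<integral>\<^sup>+x. indicator B (g x) * ennreal (g' x) * indicator {0..1} x \<partial>lborel)"
    by (rule nn_integral_substitution_aux[OF _ _ dg cg nn]) auto
  also have "\<dots> = (\<integral>\<^sup>+x. indicator B (g (1 + (-1) * x)) * ennreal (g' (1 + (-1) * x)) * indicator {0..1} (1 + (-1) * x) \<partial>lborel)"
    by (subst nn_integral_real_affine[where c = "-1" and t = 1]) (auto simp: g_def g'_def)
  also have "\<dots> = (\<integral>\<^sup>+x. ennreal (wt c x) * indicator {0..1} x * indicator B (phi c x) \<partial>lborel)"
  proof (rule nn_integral_cong)
    fix x :: real
    show "indicator B (g (1 + (-1) * x)) * ennreal (g' (1 + (-1) * x)) * indicator {0..1} (1 + (-1) * x)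
       = ennreal (wt c x) * indicator {0..1} x * indicator B (phi c x)"
    proof (cases "x \<in> {0..1}")
      case True
      have "1 - c + c * (1 - x) = 1 - c * x" by (simp add: algebra_simps)
      then have "g (1 - x) = phi c x" "g' (1 - x) = wt c x"
        unfolding g_def g'_def phi_def wt_def by (simp_all only:)
      then show ?thesis using True by (simp add: indicator_def)
    qed (auto simp: indicator_def)
  qed
  finally show ?thesis by (simp add: g_def mult.commute)
qed

lemma prod_ind:
  fixes S :: "'i \<Rightarrow> 'b set"
  assumes "finite I"
  shows "(\<Prod>j\<in>I. (indicator (S j) (f j) :: ennreal)) = (if \<forall>j\<in>I. f j \<in> S j then 1 else 0)"
  using assms by (induction I rule: finite_induct) (auto simp: indicator_def)

definition MM :: "nat \<Rightarrow> (nat \<Rightarrow> real) measure" where "MM k = PiM {..<k} (\<lambda>_. lborel)"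
definition TT :: "real \<Rightarrow> nat \<Rightarrow> (nat \<Rightarrow> real) \<Rightarrow> (nat \<Rightarrow> real)" where
  "TT c k t = (\<lambda>i\<in>{..<k}. phi c (t (k - Suc i)))"
definition WW :: "real \<Rightarrow> nat \<Rightarrow> (nat \<Rightarrow> real) \<Rightarrow> ennreal" where
  "WW c k t = (\<Prod>j<k. ennreal (wt c (t j)) * indicator {0..1} (t j))"
definition BB :: "nat \<Rightarrow> (nat \<Rightarrow> real) \<Rightarrow> ennreal" where
  "BB k t = (\<Prod>j<k. indicator {0..1} (t j))"

lemma phi_meas[measurable]: "phi c \<in> borel_measurable borel"
  unfolding phi_def by measurable
lemma wt_meas[measurable]: "wt c \<in> borel_measurable borel"
  unfolding wt_def by measurable

lemma TT_meas[measurable]: "TT c k \<in> MM k \<rightarrow>\<^sub>M MM k"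
  unfolding TT_def MM_def
  by (rule measurable_restrict) auto

lemma WW_meas[measurable]: "WW c k \<in> borel_measurable (MM k)"
  unfolding WW_def MM_def by measurable
lemma BB_meas[measurable]: "BB k \<in> borel_measurable (MM k)"
  unfolding BB_def MM_def by measurable

lemma reind: "(\<Prod>j<k. f (k - Suc j)) = (\<Prod>i<k. (f i :: 'a::comm_monoid_mult))"
  by (rule prod.reindex_bij_witness[where i="\<lambda>j. k - Suc j" and j="\<lambda>j. k - Suc j"]) auto

lemma distrT:
  fixes c :: real assumes c: "c < 1"
  shows "distr (density (MM k) (WW c k)) (MM k) (TT c k) = density (MM k) (BB k)"
proof -
  interpret product_sigma_finite "\<lambda>_::nat. lborel :: real measure" by standard
  have key: "emeasure (distr (density (MM k) (WW c k)) (MM k) (TT c k)) (Pi\<^sub>E {..<k} A)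
           = emeasure (density (MM k) (BB k)) (Pi\<^sub>E {..<k} A)"
       "emeasure (density (MM k) (BB k)) (Pi\<^sub>E {..<k} A) = (\<Prod>i<k. \<integral>\<^sup>+y. indicator {0..1} y * indicator (A i) y \<partial>lborel)"
    if A: "\<And>i. i \<in> {..<k} \<Longrightarrow> A i \<in> sets lborel" for A
  proof -
    have PA: "Pi\<^sub>E {..<k} A \<in> sets (MM k)"
      unfolding MM_def using A by (intro sets_PiM_I_finite) auto
    have R: "emeasure (density (MM k) (BB k)) (Pi\<^sub>E {..<k} A)
        = (\<integral>\<^sup>+t. (\<Prod>i<k. indicator {0..1} (t i) * indicator (A i) (t i)) \<partial>MM k)"
      using PA
      apply (subst emeasure_density, measurable)
      apply (rule nn_integral_cong)
      apply (simp add: BB_def prod.distrib prod_ind MM_def space_PiM PiE_iff indicator_def)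
      done
    also have "\<dots> = (\<Prod>i<k. \<integral>\<^sup>+y. indicator {0..1} y * indicator (A i) y \<partial>lborel)"
      unfolding MM_def using A by (subst product_nn_integral_prod) auto
    finally have R2: "emeasure (density (MM k) (BB k)) (Pi\<^sub>E {..<k} A) = (\<Prod>i<k. \<integral>\<^sup>+y. indicator {0..1} y * indicator (A i) y \<partial>lborel)" .
    then show "emeasure (density (MM k) (BB k)) (Pi\<^sub>E {..<k} A) = (\<Prod>i<k. \<integral>\<^sup>+y. indicator {0..1} y * indicator (A i) y \<partial>lborel)" .
    have "emeasure (distr (density (MM k) (WW c k)) (MM k) (TT c k)) (Pi\<^sub>E {..<k} A)
        = emeasure (density (MM k) (WW c k)) (TT c k -` Pi\<^sub>E {..<k} A \<inter> space (MM k))"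
      using PA by (subst emeasure_distr) auto
    also have "\<dots> = (\<integral>\<^sup>+t. (\<Prod>j<k. ennreal (wt c (t j)) * indicator {0..1} (t j) * indicator (A (k - Suc j)) (phi c (t j))) \<partial>MM k)"
    proof -
      have ind_pre: "indicator (TT c k -` Pi\<^sub>E {..<k} A \<inter> space (MM k)) t = (\<Prod>j<k. (indicator (A (k - Suc j)) (phi c (t j)) :: ennreal))"
        if t: "t \<in> space (MM k)" for t
      proof -
        have "TT c k t \<in> Pi\<^sub>E {..<k} A \<longleftrightarrow> (\<forall>i<k. phi c (t (k - Suc i)) \<in> A i)"
          by (auto simp: TT_def PiE_iff)
        also have "\<dots> \<longleftrightarrow> (\<forall>j<k. phi c (t j) \<in> A (k - Suc j))"
        proof
          assume H: "\<forall>i<k. phi c (t (k - Suc i)) \<in> A i"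
          show "\<forall>j<k. phi c (t j) \<in> A (k - Suc j)"
          proof (intro allI impI)
            fix j assume "j < k"
            then have "k - Suc (k - Suc j) = j" "k - Suc j < k" by auto
            then show "phi c (t j) \<in> A (k - Suc j)" using H by metis
          qed
        next
          assume H: "\<forall>j<k. phi c (t j) \<in> A (k - Suc j)"
          show "\<forall>i<k. phi c (t (k - Suc i)) \<in> A i"
          proof (intro allI impI)
            fix i assume "i < k"
            then have "k - Suc (k - Suc i) = i" "k - Suc i < k" by auto
            then show "phi c (t (k - Suc i)) \<in> A i" using H by metis
          qed
        qed
        finally show ?thesis using t by (auto simp: prod_ind indicator_def)
      qed
      have "TT c k -` Pi\<^sub>E {..<k} A \<inter> space (MM k) \<in> sets (MM k)"
        using PA by measurable
      then show ?thesis
        apply (subst emeasure_density[OF WW_meas], assumption)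
        apply (rule nn_integral_cong)
        subgoal for t
          apply (simp only: WW_def prod.distrib ind_pre)
          done
        done
    qed
    also have "\<dots> = (\<Prod>j<k. \<integral>\<^sup>+x. ennreal (wt c x) * indicator {0..1} x * indicator (A (k - Suc j)) (phi c x) \<partial>lborel)"
      unfolding MM_def using A by (subst product_nn_integral_prod) auto
    also have "\<dots> = (\<Prod>j<k. \<integral>\<^sup>+y. indicator {0..1} y * indicator (A (k - Suc j)) y \<partial>lborel)"
      using A by (intro prod.cong refl oneD[OF c]) auto
    also have "\<dots> = (\<Prod>i<k. \<integral>\<^sup>+y. indicator {0..1} y * indicator (A i) y \<partial>lborel)"
      by (rule reind)
    finally show "emeasure (distr (density (MM k) (WW c k)) (MM k) (TT c k)) (Pi\<^sub>E {..<k} A)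
           = emeasure (density (MM k) (BB k)) (Pi\<^sub>E {..<k} A)" using R2 by simp
  qed
  show ?thesis
  proof (rule measure_eqI_PiM_finite[where I="{..<k}" and M="\<lambda>_. lborel" and A="\<lambda>_. Pi\<^sub>E {..<k} (\<lambda>_. UNIV)"])
    show "sets (distr (density (MM k) (WW c k)) (MM k) (TT c k)) = sets (Pi\<^sub>M {..<k} (\<lambda>_. lborel))"
      by (simp add: MM_def)
    show "sets (density (MM k) (BB k)) = sets (Pi\<^sub>M {..<k} (\<lambda>_. lborel))"
      by (simp add: MM_def)
    show "range (\<lambda>_. Pi\<^sub>E {..<k} (\<lambda>_. UNIV)) \<subseteq> prod_algebra {..<k} (\<lambda>_. lborel :: real measure)"
      by (auto intro!: prod_algebraI_finite)
    show "(\<Union>i::nat. Pi\<^sub>E {..<k} (\<lambda>_. UNIV)) = space (Pi\<^sub>M {..<k} (\<lambda>_. lborel :: real measure))"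
      by (simp add: space_PiM)
    show "emeasure (distr (density (MM k) (WW c k)) (MM k) (TT c k)) (Pi\<^sub>E {..<k} (\<lambda>_. UNIV)) \<noteq> \<infinity>" for i :: nat
      using key[of "\<lambda>_. UNIV"] by simp
  qed (auto intro: key)
qed


lemma phi_less_iff:
  fixes c x y :: real assumes c: "c < 1" and x: "0 \<le> x" "x \<le> 1" and y: "0 \<le> y" "y \<le> 1"
  shows "phi c x < phi c y \<longleftrightarrow> y < x"
proof -
  have dx: "0 < 1 - c * x" and dy: "0 < 1 - c * y" using pos_den c x y by auto
  have "phi c x - phi c y = (y - x) * (1 - c) / ((1 - c * x) * (1 - c * y))"
    unfolding phi_def using dx dy by (simp add: field_simps)
  moreover have "0 < (1 - c) / ((1 - c * x) * (1 - c * y))" using dx dy c by simp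
  ultimately have "phi c x - phi c y = (y - x) * ((1 - c) / ((1 - c * x) * (1 - c * y)))" by simp
  then show ?thesis using \<open>0 < (1 - c) / ((1 - c * x) * (1 - c * y))\<close>
    by (smt (verit) mult_pos_pos mult_neg_pos)
qed

lemma phi_0: "phi c 0 = 1" and phi_1: "c \<noteq> 1 \<Longrightarrow> phi c 1 = 0"
  by (auto simp: phi_def)

lemma phi_pos_iff:
  fixes c x :: real assumes c: "c < 1" and x: "0 \<le> x" "x \<le> 1"
  shows "0 < phi c x \<longleftrightarrow> x < 1"
  using phi_less_iff[OF c _ _ x, of 1] c by (simp add: phi_1)

lemma phi_lt1_iff:
  fixes c x :: real assumes c: "c < 1" and x: "0 \<le> x" "x \<le> 1"
  shows "phi c x < 1 \<longleftrightarrow> 0 < x"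
  using phi_less_iff[OF c x, of 0] by (simp add: phi_0)

lemma omega_nonneg:
  fixes c x :: real assumes c: "c < 1" and x: "0 < x" "x < 1"
  shows "0 \<le> omega c e x"
  using pos_den[OF c, of x] x c by (auto simp: omega_def)

lemma omega_dual:
  fixes c x :: real assumes c: "c < 1" and x: "0 < x" "x < 1" and e: "e \<in> {0, 1}"
  shows "omega c (1 - e) (phi c x) * wt c x = omega c e x"
proof -
  have d: "0 < 1 - c * x" using pos_den[OF c, of x] x by auto
  have a: "1 - phi c x = x * (1 - c) / (1 - c * x)" unfolding phi_def using d by (simp add: field_simps)
  have b: "1 - c * phi c x = (1 - c) / (1 - c * x)" unfolding phi_def using d by (simp add: field_simps)
  have cc: "1 - c \<noteq> 0" using c by simp
  show ?thesis
  proof (cases "e = 0")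
    case True
    have "omega c (1 - e) (phi c x) = (1-c) / ((1 - phi c x) * (1 - c * phi c x))"
      using True by (simp add: omega_def)
    also have "\<dots> = (1-c) / ((x * (1 - c) / (1 - c * x)) * ((1 - c) / (1 - c * x)))"
      by (simp only: a b)
    also have "\<dots> = (1 - c * x)^2 / (x * (1 - c))"
    proof -
      have gen: "u / ((x*u/D)*(u/D)) = D^2/(x*u)" if "u \<noteq> 0" "D \<noteq> 0" "x \<noteq> 0" for u D :: real
        using that by (simp add: field_simps power2_eq_square)
      show ?thesis using gen[of "1 - c" "1 - c * x"] d x cc by simp
    qed
    finally have "omega c (1 - e) (phi c x) * wt c x = (1 - c * x)^2 / (x * (1 - c)) * ((1 - c) / (1 - c * x)^2)"
      by (simp add: wt_def)
    also have "\<dots> = 1 / x"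
    proof -
      have gen: "D^2/(x*u) * (u/D^2) = 1/x" if "u \<noteq> 0" "D \<noteq> 0" "x \<noteq> 0" for u D :: real
        using that by (simp add: field_simps power2_eq_square)
      show ?thesis using gen[of "1 - c" "1 - c * x"] d x cc by simp
    qed
    finally show ?thesis using True by (simp add: omega_def)
  next
    case False
    then have "e = 1" using e by auto
    have gen: "1 / (v / D) * (u / D^2) = u / (v * D)" if "v \<noteq> 0" "D \<noteq> 0" for u v D :: real
      using that by (simp add: field_simps power2_eq_square)
    have "omega c (1 - e) (phi c x) * wt c x = 1/((1 - x)/(1 - c*x)) * ((1-c)/(1-c*x)^2)"
      using \<open>e = 1\<close> by (simp add: omega_def phi_def wt_def)
    also have "\<dots> = (1-c)/((1-x)*(1-c*x))" using gen[of "1-x" "1-c*x" "1-c"] d x by simp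
    finally show ?thesis using \<open>e = 1\<close> by (simp add: omega_def)
  qed
qed


lemma simp_meas[measurable]: "open_simplex k \<inter> space (MM k) \<in> sets (MM k)"
proof -
  have "open_simplex k \<inter> space (MM k) = {t \<in> space (MM k). (\<forall>i\<in>{..<k}. 0 < t i \<and> t i < 1) \<and> (\<forall>i\<in>{..<k-1}. t i < t (Suc i))}"
    by (auto simp: open_simplex_def)
  also have "\<dots> \<in> sets (MM k)"
    unfolding MM_def by measurable
  finally show ?thesis .
qed

definition FF :: "real \<Rightarrow> nat list \<Rightarrow> nat \<Rightarrow> (nat \<Rightarrow> real) \<Rightarrow> real" where
  "FF c es k t = indicator (open_simplex k) t * (\<Prod>i<k. omega c (es ! i) (t i))"

lemma omega_meas[measurable]: "omega c e \<in> borel_measurable borel"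
  unfolding omega_def by measurable

lemma FF_meas[measurable]: "FF c es k \<in> borel_measurable (MM k)"
proof -
  have i: "(indicator (open_simplex k \<inter> space (MM k)) :: _ \<Rightarrow> real) \<in> borel_measurable (MM k)"
    by (rule borel_measurable_indicator) (rule simp_meas)
  have p: "(\<lambda>t. \<Prod>i<k. omega c (es ! i) (t i)) \<in> borel_measurable (MM k)"
    unfolding MM_def by measurable
  have "(\<lambda>t. indicator (open_simplex k \<inter> space (MM k)) t * (\<Prod>i<k. omega c (es ! i) (t i))) \<in> borel_measurable (MM k)"
    using i p by (rule borel_measurable_times)
  then show ?thesis
    by (subst measurable_cong[where g = "\<lambda>t. indicator (open_simplex k \<inter> space (MM k)) t * (\<Prod>i<k. omega c (es ! i) (t i))"])
       (auto simp: FF_def indicator_def)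
qed

lemma FF_nonneg: assumes "c < 1" shows "0 \<le> FF c es k t"
  unfolding FF_def using omega_nonneg[OF assms]
  by (auto simp: indicator_def open_simplex_def intro!: prod_nonneg)

lemma iterI_nn: assumes "c < 1"
  shows "iterI c es = enn2real (\<integral>\<^sup>+t. ennreal (FF c es (length es) t) \<partial>MM (length es))"
proof -
  have eq: "(\<lambda>t. indicator (open_simplex (length es)) t * (\<Prod>i<length es. omega c (es ! i) (t i))) = FF c es (length es)"
    by (rule ext) (simp add: FF_def)
  show ?thesis unfolding iterI_def eq MM_def[symmetric]
    using FF_meas[of c es "length es"] FF_nonneg[OF assms]
    by (intro integral_eq_nn_integral) (auto simp: MM_def)
qed

lemma rev_forall: "(\<forall>i<k. P (k - Suc i)) \<longleftrightarrow> (\<forall>j<k. P j)"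
proof
  assume H: "\<forall>i<k. P (k - Suc i)"
  show "\<forall>j<k. P j"
  proof (intro allI impI)
    fix j assume "j < k"
    then have "k - Suc (k - Suc j) = j" "k - Suc j < k" by auto
    then show "P j" using H by metis
  qed
qed auto

lemma rev_forall2: "(\<forall>i. Suc i < k \<longrightarrow> P (k - Suc (Suc i))) \<longleftrightarrow> (\<forall>j. Suc j < k \<longrightarrow> P j)"
proof
  assume H: "\<forall>i. Suc i < k \<longrightarrow> P (k - Suc (Suc i))"
  show "\<forall>j. Suc j < k \<longrightarrow> P j"
  proof (intro allI impI)
    fix j assume "Suc j < k"
    then have "k - Suc (Suc (k - Suc (Suc j))) = j" "Suc (k - Suc (Suc j)) < k" by auto
    then show "P j" using H by metis
  qed
qed auto

lemma TT_simplex: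
  assumes c: "c < 1" and t: "\<forall>j<k. 0 \<le> t j \<and> t j \<le> 1"
  shows "TT c k t \<in> open_simplex k \<longleftrightarrow> t \<in> open_simplex k"
proof -
  have A: "(\<forall>i<k. 0 < TT c k t i \<and> TT c k t i < 1) \<longleftrightarrow> (\<forall>j<k. 0 < t j \<and> t j < 1)"
  proof -
    have "(\<forall>i<k. 0 < TT c k t i \<and> TT c k t i < 1) \<longleftrightarrow> (\<forall>i<k. (\<lambda>j. 0 < t j \<and> t j < 1) (k - Suc i))"
      using t phi_pos_iff[OF c] phi_lt1_iff[OF c] by (auto simp: TT_def)
    then show ?thesis using rev_forall[of k "\<lambda>j. 0 < t j \<and> t j < 1"] by simp
  qed
  have B: "(\<forall>i. Suc i < k \<longrightarrow> TT c k t i < TT c k t (Suc i)) \<longleftrightarrow> (\<forall>j. Suc j < k \<longrightarrow> t j < t (Suc j))"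
  proof -
    have "(\<forall>i. Suc i < k \<longrightarrow> TT c k t i < TT c k t (Suc i)) \<longleftrightarrow>
       (\<forall>i. Suc i < k \<longrightarrow> (\<lambda>j. t j < t (Suc j)) (k - Suc (Suc i)))"
    proof (intro all_cong1 imp_cong refl)
      fix i assume i: "Suc i < k"
      then have e: "k - Suc i = Suc (k - Suc (Suc i))" by auto
      show "(TT c k t i < TT c k t (Suc i)) = (t (k - Suc (Suc i)) < t (Suc (k - Suc (Suc i))))"
        using i t phi_less_iff[OF c, of "t (k - Suc i)" "t (k - Suc (Suc i))"]
        by (auto simp: TT_def e)
    qed
    then show ?thesis using rev_forall2[of k "\<lambda>j. t j < t (Suc j)"] by simp
  qed
  show ?thesis unfolding open_simplex_def using A B by simp
qed


lemma wt_nonneg: "c < 1 \<Longrightarrow> 0 \<le> wt c x"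
  by (simp add: wt_def)

lemma pointwise:
  assumes c: "c < 1" and es: "set es \<subseteq> {0, 1}" and k: "k = length es"
  shows "WW c k t * ennreal (FF c (rev (map (\<lambda>e. 1 - e) es)) k (TT c k t)) = ennreal (FF c es k t)"
proof (cases "\<forall>j<k. 0 \<le> t j \<and> t j \<le> 1")
  case False
  then obtain j where j: "j < k" "\<not> (0 \<le> t j \<and> t j \<le> 1)" by auto
  then have "WW c k t = 0" unfolding WW_def by (auto simp: indicator_def)
  moreover have "t \<notin> open_simplex k" using j by (auto simp: open_simplex_def)
  ultimately show ?thesis by (simp add: FF_def)
next
  case True
  let ?es' = "rev (map (\<lambda>e. 1 - e) es)"
  have W: "WW c k t = ennreal (\<Prod>j<k. wt c (t j))"
    unfolding WW_def using True wt_nonneg[OF c]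
    by (simp add: indicator_def prod_ennreal)
  show ?thesis
  proof (cases "t \<in> open_simplex k")
    case False
    then have "TT c k t \<notin> open_simplex k" using TT_simplex[OF c True] by simp
    then show ?thesis using False by (simp add: FF_def)
  next
    case ins: True
    then have tt: "TT c k t \<in> open_simplex k" using TT_simplex[OF c True] by simp
    have t01: "0 < t j" "t j < 1" if "j < k" for j using ins that by (auto simp: open_simplex_def)
    define G where "G j = omega c (1 - es ! j) (phi c (t j))" for j
    have "FF c ?es' k (TT c k t) = (\<Prod>i<k. omega c (?es' ! i) (TT c k t i))"
      using tt by (simp add: FF_def)
    also have "\<dots> = (\<Prod>i<k. G (k - Suc i))"
      by (rule prod.cong) (auto simp: G_def TT_def rev_nth k)
    also have "\<dots> = (\<Prod>j<k. G j)" by (rule reind)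
    finally have F': "FF c ?es' k (TT c k t) = (\<Prod>j<k. G j)" .
    have Gnn: "0 \<le> G j" if "j < k" for j
      unfolding G_def using True that phi_pos_iff[OF c] phi_lt1_iff[OF c] t01[OF that]
      by (intro omega_nonneg[OF c]) auto
    have "ennreal (\<Prod>j<k. wt c (t j)) * ennreal (\<Prod>j<k. G j) = ennreal ((\<Prod>j<k. wt c (t j)) * (\<Prod>j<k. G j))"
      using Gnn wt_nonneg[OF c] by (intro ennreal_mult[symmetric] prod_nonneg) auto
    also have "(\<Prod>j<k. wt c (t j)) * (\<Prod>j<k. G j) = (\<Prod>j<k. G j * wt c (t j))"
      by (simp add: prod.distrib mult.commute)
    also have "\<dots> = (\<Prod>j<k. omega c (es ! j) (t j))"
    proof (rule prod.cong)
      fix j assume "j \<in> {..<k}"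
      then have j: "j < k" by simp
      have "es ! j \<in> {0, 1}" using es j k nth_mem by blast
      then show "G j * wt c (t j) = omega c (es ! j) (t j)"
        unfolding G_def using omega_dual[OF c t01[OF j]] by simp
    qed simp
    finally show ?thesis using W F' ins by (simp add: FF_def)
  qed
qed

lemma duality:
  assumes c: "c < 1" and es: "set es \<subseteq> {0, 1}"
  shows "iterI c es = iterI c (rev (map (\<lambda>e. 1 - e) es))"
proof -
  define k where "k = length es"
  let ?es' = "rev (map (\<lambda>e. 1 - e) es)"
  have lk: "length ?es' = k" by (simp add: k_def)
  have "(\<integral>\<^sup>+t. ennreal (FF c ?es' k t) \<partial>MM k) = (\<integral>\<^sup>+t. BB k t * ennreal (FF c ?es' k t) \<partial>MM k)"
  proof (rule nn_integral_cong)
    fix t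
    show "ennreal (FF c ?es' k t) = BB k t * ennreal (FF c ?es' k t)"
    proof (cases "t \<in> open_simplex k")
      case True
      then have "BB k t = 1" unfolding BB_def
        by (intro prod.neutral) (auto simp: open_simplex_def indicator_def less_imp_le)
      then show ?thesis by simp
    qed (simp add: FF_def)
  qed
  also have "\<dots> = (\<integral>\<^sup>+t. ennreal (FF c ?es' k t) \<partial>density (MM k) (BB k))"
    by (subst nn_integral_density) auto
  also have "\<dots> = (\<integral>\<^sup>+t. ennreal (FF c ?es' k t) \<partial>distr (density (MM k) (WW c k)) (MM k) (TT c k))"
    by (simp add: distrT[OF c])
  also have "\<dots> = (\<integral>\<^sup>+t. ennreal (FF c ?es' k (TT c k t)) \<partial>density (MM k) (WW c k))"
    by (subst nn_integral_distr) auto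
  also have "\<dots> = (\<integral>\<^sup>+t. WW c k t * ennreal (FF c ?es' k (TT c k t)) \<partial>MM k)"
    by (subst nn_integral_density) auto
  also have "\<dots> = (\<integral>\<^sup>+t. ennreal (FF c es k t) \<partial>MM k)"
    using pointwise[OF c es k_def] by simp
  finally show ?thesis
    using iterI_nn[OF c, of es] iterI_nn[OF c, of ?es'] lk by (simp add: k_def)
qed


theorem mainTheorem2:
  fixes c :: real
  assumes "c \<noteq> 1" and "c < 1"
  shows "(\<forall>es :: nat list. length es \<ge> 2 \<and> set es \<subseteq> {0, 1} \<and> hd es = 1 \<and> last es = 0
            \<longrightarrow> iterI c es = iterI c (rev (map (\<lambda>e. 1 - e) es)))
         \<and> Zc c [1, 2] = Zc c [3]"
proof
  show "\<forall>es :: nat list. length es \<ge> 2 \<and> set es \<subseteq> {0, 1} \<and> hd es = 1 \<and> last es = 0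
            \<longrightarrow> iterI c es = iterI c (rev (map (\<lambda>e. 1 - e) es))"
    using duality[OF assms(2)] by blast
  have "iterI c [1, 1, 0] = iterI c (rev (map (\<lambda>e. 1 - e) [1, 1, 0]))"
    by (rule duality[OF assms(2)]) auto
  then show "Zc c [1, 2] = Zc c [3]"
    by (simp add: Zc_def numeral_eq_Suc)
qed

end
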